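(* Let $P=\Bbbk[x_1,x_2,x_3]$ with Poisson bracket $\{x_1,x_2\}=x_1x_2$, $\{x_2,x_3\}=3x_1^2+2x_1x_2+x_2x_3$, $\{x_3,x_1\}=x_1^2+x_1x_3$. If $G$ is a nontrivial finite subgroup of $\mathrm{PAut}_{\mathrm{gr}}(P)$ generated by Poisson reflections, then $P^G$ is not isomorphic to $P$ as Poisson algebras.
   Context: $\Bbbk$ is algebraically closed of characteristic $0$; $P$ has the standard grading. $\mathrm{PAut}_{\mathrm{gr}}(P)$ is the group of degree-preserving bijective algebra homomorphisms preserving the bracket. A Poisson reflection is a finite-order $\phi\in\mathrm{PAut}_{\mathrm{gr}}(P)$ such that $\phi|_{P_1}$ has eigenvalues $1,1,\xi$ with $\xi\neq1$ a primitive root of unity. $P^G$ is the subalgebra of $G$-invariants with the restricted bracket. *)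

theory Defs
  imports "HOL-Library.Poly_Mapping" "HOL-Library.Product_Plus" "Jordan_Normal_Form.Char_Poly"
begin

text \<open>Polynomials in three variables x1,x2,x3 over 'k: finitely supported maps from
exponent triples (a,b,c) (standing for x1^a x2^b x3^c) to coefficients.\<close>

type_synonym expo = "nat \<times> nat \<times> nat"
type_synonym 'k mpoly3 = "expo \<Rightarrow>\<^sub>0 'k"

definition ecomp :: "nat \<Rightarrow> expo \<Rightarrow> nat" where
  "ecomp i m = (if i = 0 then fst m else if i = 1 then fst (snd m) else snd (snd m))"

definition eunit :: "nat \<Rightarrow> expo" where
  "eunit i = (if i = 0 then (1,0,0) else if i = 1 then (0,1,0) else (0,0,1))"

definition tdeg :: "expo \<Rightarrow> nat" where
  "tdeg m = fst m + fst (snd m) + snd (snd m)"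

definition const3 :: "'k::comm_ring_1 \<Rightarrow> 'k mpoly3" where
  "const3 c = Poly_Mapping.single (0,0,0) c"

text \<open>Variable x_(i+1), i = 0,1,2.\<close>
definition var3 :: "nat \<Rightarrow> 'k::comm_ring_1 mpoly3" where
  "var3 i = Poly_Mapping.single (eunit i) 1"

definition pd :: "nat \<Rightarrow> 'k::comm_ring_1 mpoly3 \<Rightarrow> 'k mpoly3" where
  "pd i p = (\<Sum>m\<in>Poly_Mapping.keys p. Poly_Mapping.single (m - eunit i) (of_nat (ecomp i m) * Poly_Mapping.lookup p m))"

definition gbr :: "nat \<Rightarrow> nat \<Rightarrow> 'k::comm_ring_1 mpoly3" where
  "gbr i j =
    (let x1 = var3 0; x2 = var3 1; x3 = var3 2;
         b12 = x1 * x2;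
         b23 = 3 * x1 * x1 + 2 * x1 * x2 + x2 * x3;
         b31 = x1 * x1 + x1 * x3
     in if i = 0 \<and> j = 1 then b12 else if i = 1 \<and> j = 0 then - b12
        else if i = 1 \<and> j = 2 then b23 else if i = 2 \<and> j = 1 then - b23
        else if i = 2 \<and> j = 0 then b31 else if i = 0 \<and> j = 2 then - b31
        else 0)"

definition pbr :: "'k::comm_ring_1 mpoly3 \<Rightarrow> 'k mpoly3 \<Rightarrow> 'k mpoly3" where
  "pbr f g = (\<Sum>i<3. \<Sum>j<3. pd i f * pd j g * gbr i j)"

definition homog :: "nat \<Rightarrow> 'k::zero mpoly3 \<Rightarrow> bool" where
  "homog d p \<longleftrightarrow> (\<forall>m\<in>Poly_Mapping.keys p. tdeg m = d)"

text \<open>'k-algebra homomorphism P -> P (unital, hence 'k-linear since it fixes constants).\<close>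
definition alg_hom3 :: "('k::comm_ring_1 mpoly3 \<Rightarrow> 'k mpoly3) \<Rightarrow> bool" where
  "alg_hom3 f \<longleftrightarrow> (\<forall>c. f (const3 c) = const3 c) \<and> (\<forall>p q. f (p + q) = f p + f q)
      \<and> (\<forall>p q. f (p * q) = f p * f q)"

definition poisson_hom :: "('k::comm_ring_1 mpoly3 \<Rightarrow> 'k mpoly3) \<Rightarrow> bool" where
  "poisson_hom f \<longleftrightarrow> alg_hom3 f \<and> (\<forall>p q. f (pbr p q) = pbr (f p) (f q))"

definition PAut_gr :: "('k::comm_ring_1 mpoly3 \<Rightarrow> 'k mpoly3) set" where
  "PAut_gr = {f. bij f \<and> poisson_hom f \<and> (\<forall>d p. homog d p \<longrightarrow> homog d (f p))}"

definition lin_mat :: "('k::comm_ring_1 mpoly3 \<Rightarrow> 'k mpoly3) \<Rightarrow> 'k mat" where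
  "lin_mat f = mat 3 3 (\<lambda>(i,j). Poly_Mapping.lookup (f (var3 j)) (eunit i))"

definition poisson_reflection :: "('k::comm_ring_1 mpoly3 \<Rightarrow> 'k mpoly3) \<Rightarrow> bool" where
  "poisson_reflection f \<longleftrightarrow> f \<in> PAut_gr \<and> (\<exists>n>0. (f ^^ n) = id) \<and>
     (\<exists>\<xi> n. \<xi> \<noteq> 1 \<and> n > 0 \<and> \<xi> ^ n = 1 \<and> (\<forall>k. 0 < k \<and> k < n \<longrightarrow> \<xi> ^ k \<noteq> 1) \<and>
        char_poly (lin_mat f) = [:-1, 1:] ^ 2 * [:-\<xi>, 1:])"

inductive_set gen_group :: "('a \<Rightarrow> 'a) set \<Rightarrow> ('a \<Rightarrow> 'a) set" for R where
  gen_id: "id \<in> gen_group R"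
| gen_gen: "r \<in> R \<Longrightarrow> r \<in> gen_group R"
| gen_comp: "f \<in> gen_group R \<Longrightarrow> g \<in> gen_group R \<Longrightarrow> f \<circ> g \<in> gen_group R"
| gen_inv: "f \<in> gen_group R \<Longrightarrow> inv_into UNIV f \<in> gen_group R"

definition invariants :: "('k::comm_ring_1 mpoly3 \<Rightarrow> 'k mpoly3) set \<Rightarrow> 'k mpoly3 set" where
  "invariants G = {p. \<forall>g\<in>G. g p = p}"

definition poisson_iso_onto :: "('k::comm_ring_1 mpoly3 \<Rightarrow> 'k mpoly3) \<Rightarrow> 'k mpoly3 set \<Rightarrow> bool" where
  "poisson_iso_onto f A \<longleftrightarrow> bij_betw f UNIV A \<and> poisson_hom f"

end

theory Submission
  imports Defs
begin


lemma update_eq_add: "a \<notin> Poly_Mapping.keys f \<Longrightarrow> Poly_Mapping.update a b f = f + Poly_Mapping.single a b"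
  by (rule poly_mapping_eqI) (auto simp: lookup_update lookup_add lookup_single in_keys_iff when_def)

lemma pm_induct[case_names zero single add]:
  assumes "P 0" "\<And>a b. P (Poly_Mapping.single a b)" "\<And>f g. P f \<Longrightarrow> P g \<Longrightarrow> P (f + g)"
  shows "P f"
proof (induction f rule: update_induct)
  case const then show ?case using assms(1) .
next
  case (update f a b)
  then show ?case using assms(2,3) update_eq_add by metis
qed

lemma pd_add: "pd i (p + q) = pd i p + pd i q"
  unfolding pd_def
  by (rule setsum_keys_plus_distrib) (simp_all add: distrib_left single_add)

lemma pd_single: "pd i (Poly_Mapping.single m c) = Poly_Mapping.single (m - eunit i) (of_nat (ecomp i m) * c)"
  by (cases "c = 0") (simp_all add: pd_def)

lemma pd_zero[simp]: "pd i 0 = 0"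
  by (simp add: pd_def)



lemma pd_uminus: "pd i (- p) = - pd i p"
  by (metis add_eq_0_iff pd_add pd_zero)
lemma pd_diff: "pd i (p - q) = pd i p - pd i q"
  by (metis diff_conv_add_uminus pd_add pd_uminus)
lemma pd_sum: "pd i (sum f A) = (\<Sum>a\<in>A. pd i (f a))"
  by (induction A rule: infinite_finite_induct) (simp_all add: pd_add)

lemma pd_single_mult:
  "pd i (Poly_Mapping.single m a * Poly_Mapping.single n b) =
   pd i (Poly_Mapping.single m a) * Poly_Mapping.single n b + Poly_Mapping.single m a * pd i (Poly_Mapping.single n b)"
proof -
  obtain m1 m2 m3 where m: "m = (m1,m2,m3)" by (cases m) auto
  obtain n1 n2 n3 where n: "n = (n1,n2,n3)" by (cases n) auto
  consider "i = 0" | "i = 1" | "i \<noteq> 0 \<and> i \<noteq> 1" by blast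
  then show ?thesis
  proof cases
    case 1
    then show ?thesis unfolding m n
      by (cases m1; cases n1) (simp_all add: pd_single mult_single eunit_def ecomp_def algebra_simps flip: single_add)
  next
    case 2
    then show ?thesis unfolding m n
      by (cases m2; cases n2) (simp_all add: pd_single mult_single eunit_def ecomp_def algebra_simps flip: single_add)
  next
    case 3
    then show ?thesis unfolding m n
      by (cases m3; cases n3) (simp_all add: pd_single mult_single eunit_def ecomp_def algebra_simps flip: single_add)
  qed
qed

lemma pd_mult: "pd i (p * q) = pd i p * q + p * pd i q"
proof (induction p rule: pm_induct)
  case zero then show ?case by simp
next
  case (single a b)
  show ?case
  proof (induction q rule: pm_induct)
    case zero then show ?case by simp
  next
    case (single c d) then show ?case by (rule pd_single_mult)
  next
    case (add f g) then show ?case by (simp add: distrib_left pd_add algebra_simps)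
  qed
next
  case (add f g) then show ?case by (simp add: distrib_right pd_add algebra_simps)
qed

lemma zero3: "((0::nat), (0::nat), (0::nat)) = 0"
  by (simp add: zero_prod_def)

lemma const3_add: "const3 (a + b) = const3 a + const3 b"
  by (simp add: const3_def single_add)
lemma const3_mult: "const3 (a * b) = const3 a * const3 b"
  by (simp add: const3_def mult_single)
lemma const3_0[simp]: "const3 0 = 0" by (simp add: const3_def)
lemma const3_1[simp]: "const3 1 = 1" by (simp add: const3_def zero3)
lemma pd_const[simp]: "pd i (const3 c) = 0"
  by (simp add: const3_def pd_single ecomp_def)

lemma pd_var: "pd i (var3 j) = (if (i = j) \<or> (i \<ge> 2 \<and> j \<ge> 2) then 1 else 0)"
  by (auto simp add: var3_def pd_single ecomp_def eunit_def)

lemma pd_power: "pd i (p ^ n) = of_nat n * p ^ (n - 1) * pd i p"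
proof (induction n)
  case 0 then show ?case by (simp add: pd_const[of i 1, simplified])
next
  case (Suc n) then show ?case
    by (cases n) (simp_all add: pd_mult algebra_simps)
qed

lemma pd_one[simp]: "pd i 1 = 0" using pd_const[of i 1] by simp
lemma pd_numeral[simp]: "pd i (numeral k) = 0"
  using pd_const[of i "numeral k"] by (simp add: const3_def zero3)

lemma pd_comm: "pd i (pd j p) = pd j (pd i p)"
proof (induction p rule: pm_induct)
  case zero then show ?case by simp
next
  case (single m c)
  obtain m1 m2 m3 where m: "m = (m1,m2,m3)" by (cases m) auto
  show ?case unfolding m
    by (simp add: pd_single eunit_def ecomp_def algebra_simps)
next
  case (add f g) then show ?case by (simp add: pd_add)
qed



definition ev0 :: "'k::comm_ring_1 mpoly3 \<Rightarrow> 'k" where "ev0 p = Poly_Mapping.lookup p 0"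

lemma ev0_add: "ev0 (p + q) = ev0 p + ev0 q" by (simp add: ev0_def lookup_add)
lemma ev0_single: "ev0 (Poly_Mapping.single m c) = (if m = 0 then c else 0)"
  by (simp add: ev0_def lookup_single when_def)
lemma ev0_zero[simp]: "ev0 0 = 0" by (simp add: ev0_def)

lemma add3_eq_0: "(m::expo) + n = 0 \<longleftrightarrow> m = 0 \<and> n = 0"
  by (cases m; cases n) (auto simp: zero_prod_def)

lemma ev0_mult: "ev0 (p * q) = ev0 p * ev0 q"
proof (induction p rule: pm_induct)
  case zero then show ?case by simp
next
  case (single a b)
  show ?case
  proof (induction q rule: pm_induct)
    case zero then show ?case by simp
  next
    case (single c d) then show ?case by (simp add: mult_single ev0_single add3_eq_0)
  next
    case (add f g) then show ?case by (simp add: distrib_left ev0_add)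
  qed
next
  case (add f g) then show ?case by (simp add: distrib_right ev0_add)
qed

lemma ev0_uminus: "ev0 (- p) = - ev0 p" by (simp add: ev0_def)
lemma ev0_diff: "ev0 (p - q) = ev0 p - ev0 q" by (simp add: ev0_def lookup_minus)
lemma ev0_const[simp]: "ev0 (const3 c) = c" by (simp add: const3_def ev0_single zero3)
lemma ev0_one[simp]: "ev0 1 = 1" using ev0_const[of 1] by simp
lemma ev0_power: "ev0 (p ^ n) = ev0 p ^ n" by (induction n) (simp_all add: ev0_mult)
lemma ev0_numeral[simp]: "ev0 (numeral k) = numeral k"
  using ev0_const[of "numeral k"] by (simp add: const3_def zero3)
lemma ev0_var[simp]: "ev0 (var3 i) = 0"
  by (simp add: var3_def ev0_single eunit_def zero_prod_def)

definition mon :: "(nat \<Rightarrow> 'k::comm_ring_1 mpoly3) \<Rightarrow> expo \<Rightarrow> 'k mpoly3" where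
  "mon g m = g 0 ^ fst m * g 1 ^ fst (snd m) * g 2 ^ snd (snd m)"

definition subst :: "(nat \<Rightarrow> 'k::comm_ring_1 mpoly3) \<Rightarrow> 'k mpoly3 \<Rightarrow> 'k mpoly3" where
  "subst g p = (\<Sum>m\<in>Poly_Mapping.keys p. const3 (Poly_Mapping.lookup p m) * mon g m)"

lemma subst_add: "subst g (p + q) = subst g p + subst g q"
  unfolding subst_def
  by (rule setsum_keys_plus_distrib) (simp_all add: const3_add distrib_right)

lemma subst_single: "subst g (Poly_Mapping.single m c) = const3 c * mon g m"
  by (cases "c = 0") (simp_all add: subst_def)

lemma subst_zero[simp]: "subst g 0 = 0" by (simp add: subst_def)

lemma mon_add: "mon g (m + n) = mon g m * mon g n"
  by (cases m; cases n) (simp add: mon_def power_add algebra_simps)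

lemma subst_mult: "subst g (p * q) = subst g p * subst g q"
proof (induction p rule: pm_induct)
  case zero then show ?case by simp
next
  case (single a b)
  show ?case
  proof (induction q rule: pm_induct)
    case zero then show ?case by simp
  next
    case (single c d) then show ?case by (simp add: mult_single subst_single mon_add const3_mult algebra_simps)
  next
    case (add f1 f2) then show ?case by (simp add: distrib_left subst_add)
  qed
next
  case (add f1 f2) then show ?case by (simp add: distrib_right subst_add)
qed

lemma subst_uminus: "subst g (- p) = - subst g p"
  by (metis add_eq_0_iff subst_add subst_zero)
lemma subst_diff: "subst g (p - q) = subst g p - subst g q"
  by (metis diff_conv_add_uminus subst_add subst_uminus)
lemma subst_const[simp]: "subst g (const3 c) = const3 c"
  by (simp add: const3_def subst_single mon_def zero_prod_def)
lemma subst_one[simp]: "subst g 1 = 1" using subst_const[of g 1] by simp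
lemma subst_numeral[simp]: "subst g (numeral k) = numeral k"
  using subst_const[of g "numeral k"] by (simp add: const3_def zero3)
lemma subst_power: "subst g (p ^ n) = subst g p ^ n" by (induction n) (simp_all add: subst_mult)
lemma subst_var0[simp]: "subst g (var3 0) = g 0"
  by (simp add: var3_def subst_single mon_def eunit_def const3_def zero3)
lemma subst_var1[simp]: "subst g (var3 (Suc 0)) = g 1"
  by (simp add: var3_def subst_single mon_def eunit_def const3_def zero3)
lemma subst_var2[simp]: "subst g (var3 2) = g 2"
  by (simp add: var3_def subst_single mon_def eunit_def const3_def zero3)
lemma subst_sum: "subst g (sum f A) = (\<Sum>a\<in>A. subst g (f a))"
  by (induction A rule: infinite_finite_induct) (simp_all add: subst_add)

lemma var_pow0: "var3 0 ^ n = Poly_Mapping.single (n,0,0) 1"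
  by (induction n) (simp add: zero3, simp add: var3_def eunit_def mult_single)
lemma var_pow1: "var3 (Suc 0) ^ n = Poly_Mapping.single (0,n,0) 1"
  by (induction n) (simp add: zero3, simp add: var3_def eunit_def mult_single)
lemma var_pow2: "var3 2 ^ n = Poly_Mapping.single (0,0,n) 1"
  by (induction n) (simp add: zero3, simp add: var3_def eunit_def mult_single)

lemma single_decomp: "Poly_Mapping.single m c = const3 c * mon var3 m"
  by (cases m) (simp add: mon_def var_pow0 var_pow1 var_pow2 const3_def mult_single zero3)

lemma alg_hom3_zero: "alg_hom3 f \<Longrightarrow> f 0 = 0"
  unfolding alg_hom3_def by (metis add_cancel_right_right add_0)
lemma alg_hom3_power: "alg_hom3 f \<Longrightarrow> f (p ^ n) = f p ^ n"
  unfolding alg_hom3_def by (induction n) (auto, metis const3_1)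

lemma alg_hom3_subst: assumes "alg_hom3 f" shows "f p = subst (\<lambda>i. f (var3 i)) p"
proof (induction p rule: pm_induct)
  case zero then show ?case using alg_hom3_zero[OF assms] by simp
next
  case (single m c)
  have "f (Poly_Mapping.single m c) = f (const3 c * mon var3 m)" by (simp add: single_decomp)
  also have "\<dots> = const3 c * mon (\<lambda>i. f (var3 i)) m"
    using assms unfolding mon_def alg_hom3_def by (simp add: alg_hom3_power[OF assms])
  finally show ?case by (simp add: subst_single)
next
  case (add p q) then show ?case using assms by (simp add: alg_hom3_def subst_add)
qed



lemma sum3: "(\<Sum>j<3. f j) = f 0 + f 1 + f (2::nat)"
  by (simp add: eval_nat_numeral)

lemma const3_of_nat: "const3 (of_nat n) = of_nat n"
  by (simp add: const3_def zero3)

lemma chain_single: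
  "pd i (subst g (Poly_Mapping.single m c)) = (\<Sum>j<3. subst g (pd j (Poly_Mapping.single m c)) * pd i (g j))"
proof -
  obtain a b d where m: "m = (a,b,d)" by (cases m) auto
  have lhs: "pd i (subst g (Poly_Mapping.single m c)) =
     const3 c * (of_nat a * g 0 ^ (a - 1) * pd i (g 0) * g 1 ^ b * g 2 ^ d
      + g 0 ^ a * (of_nat b * g 1 ^ (b - 1) * pd i (g 1)) * g 2 ^ d
      + g 0 ^ a * g 1 ^ b * (of_nat d * g 2 ^ (d - 1) * pd i (g 2)))"
    unfolding m by (simp add: subst_single mon_def pd_mult pd_power algebra_simps)
  have r0: "subst g (pd 0 (Poly_Mapping.single m c)) = const3 c * of_nat a * g 0 ^ (a - 1) * g 1 ^ b * g 2 ^ d"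
    unfolding m by (cases a) (simp_all add: pd_single subst_single mon_def eunit_def ecomp_def const3_mult const3_add const3_of_nat algebra_simps)
  have r1: "subst g (pd 1 (Poly_Mapping.single m c)) = const3 c * of_nat b * g 0 ^ a * g 1 ^ (b - 1) * g 2 ^ d"
    unfolding m by (cases b) (simp_all add: pd_single subst_single mon_def eunit_def ecomp_def const3_mult const3_add const3_of_nat algebra_simps)
  have r2: "subst g (pd 2 (Poly_Mapping.single m c)) = const3 c * of_nat d * g 0 ^ a * g 1 ^ b * g 2 ^ (d - 1)"
    unfolding m by (cases d) (simp_all add: pd_single subst_single mon_def eunit_def ecomp_def const3_mult const3_add const3_of_nat algebra_simps)
  show ?thesis unfolding lhs sum3 r0 r1 r2 by (simp add: algebra_simps)
qed

lemma chain: "pd i (subst g p) = (\<Sum>j<3. subst g (pd j p) * pd i (g j))"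
proof (induction p rule: pm_induct)
  case zero then show ?case by simp
next
  case (single m c) then show ?case by (rule chain_single)
next
  case (add p q) then show ?case by (simp add: subst_add pd_add sum.distrib distrib_right)
qed

definition jac3 :: "'k::comm_ring_1 mpoly3 \<Rightarrow> 'k mpoly3 \<Rightarrow> 'k mpoly3 \<Rightarrow> 'k mpoly3" where
  "jac3 a b c = (pd 1 a * pd 2 b - pd 2 a * pd 1 b) * pd 0 c + (pd 2 a * pd 0 b - pd 0 a * pd 2 b) * pd 1 c
     + (pd 0 a * pd 1 b - pd 1 a * pd 0 b) * pd 2 c"

lemma det3_mult:
  fixes p0 p1 p2 q0 q1 q2 t0 t1 t2 :: "'a::comm_ring_1"
  shows
  "((p0 * a0 1 + p1 * a1 1 + p2 * a2 1) * (q0 * a0 2 + q1 * a1 2 + q2 * a2 2)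
    - (p0 * a0 2 + p1 * a1 2 + p2 * a2 2) * (q0 * a0 1 + q1 * a1 1 + q2 * a2 1)) * (t0 * a0 0 + t1 * a1 0 + t2 * a2 0)
   + ((p0 * a0 2 + p1 * a1 2 + p2 * a2 2) * (q0 * a0 0 + q1 * a1 0 + q2 * a2 0)
    - (p0 * a0 0 + p1 * a1 0 + p2 * a2 0) * (q0 * a0 2 + q1 * a1 2 + q2 * a2 2)) * (t0 * a0 1 + t1 * a1 1 + t2 * a2 1)
   + ((p0 * a0 0 + p1 * a1 0 + p2 * a2 0) * (q0 * a0 1 + q1 * a1 1 + q2 * a2 1)
    - (p0 * a0 1 + p1 * a1 1 + p2 * a2 1) * (q0 * a0 0 + q1 * a1 0 + q2 * a2 0)) * (t0 * a0 2 + t1 * a1 2 + t2 * a2 2)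
   = ((a0 1 * a1 2 - a0 2 * a1 1) * a2 0 + (a0 2 * a1 0 - a0 0 * a1 2) * a2 1 + (a0 0 * a1 1 - a0 1 * a1 0) * a2 2)
     * ((p1 * q2 - p2 * q1) * t0 + (p2 * q0 - p0 * q2) * t1 + (p0 * q1 - p1 * q0) * t2)"
  by (simp add: algebra_simps)

lemma jac3_subst: "jac3 (subst g p) (subst g q) (subst g t) = jac3 (g 0) (g 1) (g 2) * subst g (jac3 p q t)"
  unfolding jac3_def chain sum3 subst_add subst_diff subst_mult
  by (rule det3_mult)



definition Om :: "'k::comm_ring_1 mpoly3" where
  "Om = var3 0 ^ 3 + var3 0 ^ 2 * var3 1 + var3 0 * var3 1 * var3 2"

lemma pd0_Om: "pd 0 Om = 3 * var3 0 * var3 0 + 2 * var3 0 * var3 1 + var3 1 * var3 2"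
  by (simp add: Om_def pd_add pd_mult pd_power pd_var algebra_simps power2_eq_square)
lemma pd1_Om: "pd 1 Om = var3 0 * var3 0 + var3 0 * var3 2"
  by (simp add: Om_def pd_add pd_mult pd_power pd_var algebra_simps power2_eq_square)
lemma pd1_Om': "pd (Suc 0) Om = var3 0 * var3 0 + var3 0 * var3 2"
  using pd1_Om by simp
lemma pd2_Om: "pd 2 Om = var3 0 * var3 1"
  by (simp add: Om_def pd_add pd_mult pd_power pd_var algebra_simps power2_eq_square)

lemma pbr_jac: "pbr f g = jac3 f g Om"
  by (simp add: pbr_def jac3_def sum3 gbr_def Let_def pd0_Om pd1_Om pd1_Om' pd2_Om algebra_simps)



definition lf :: "'k::comm_ring_1 \<Rightarrow> 'k \<Rightarrow> 'k \<Rightarrow> 'k mpoly3" where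
  "lf a b c = Poly_Mapping.single (1,0,0) a + Poly_Mapping.single (0,1,0) b + Poly_Mapping.single (0,0,1) c"

lemma pd_lf: "pd 0 (lf a b c) = const3 a" "pd (Suc 0) (lf a b c) = const3 b" "pd 2 (lf a b c) = const3 c"
  by (simp_all add: lf_def pd_add pd_single eunit_def ecomp_def const3_def zero3)

lemma pd_lf1: "pd 1 (lf a b c) = const3 b" using pd_lf(2) by simp

lemma numeral_mult_single: "(numeral n :: 'k::comm_ring_1 mpoly3) * Poly_Mapping.single m d = Poly_Mapping.single m (numeral n * d)"
  by (metis add_0 mult_single single_numeral)

lemma var_single: "var3 0 = Poly_Mapping.single (1,0,0) 1" "var3 (Suc 0) = Poly_Mapping.single (0,1,0) 1"
   "var3 2 = Poly_Mapping.single (0,0,1) 1"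
  by (simp_all add: var3_def eunit_def)

lemma const3_mult_single: "const3 c * Poly_Mapping.single m d = Poly_Mapping.single m (c * d)"
  by (simp add: const3_def mult_single zero3)

lemma lookup_const3_mult: "Poly_Mapping.lookup (const3 c * p) k = c * Poly_Mapping.lookup p k"
proof (induction p rule: pm_induct)
  case zero then show ?case by simp
next
  case (single a b) then show ?case by (simp add: const3_mult_single lookup_single when_def)
next
  case (add f g) then show ?case by (simp add: distrib_left lookup_add)
qed

lemmas polysimps = lf_def var_single const3_mult_single mult_single distrib_left distrib_right lookup_add lookup_single
   pd0_Om pd1_Om' pd2_Om numeral_mult_single

lemma jac_lf_coeffs:
  fixes a1 a2 a3 b1 b2 b3 :: "'k::comm_ring_1"
  defines "J \<equiv> jac3 (lf a1 a2 a3) (lf b1 b2 b3) Om"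
  defines "c1 \<equiv> a2*b3 - a3*b2" and "c2 \<equiv> a3*b1 - a1*b3" and "c3 \<equiv> a1*b2 - a2*b1"
  shows "Poly_Mapping.lookup J (2,0,0) = 3*c1 + c2"
    "Poly_Mapping.lookup J (Suc 0,Suc 0,0) = 2*c1 + c3"
    "Poly_Mapping.lookup J (Suc 0,0,Suc 0) = c2"
    "Poly_Mapping.lookup J (0,Suc 0,Suc 0) = c1"
    "Poly_Mapping.lookup J (0,2,0) = 0"
    "Poly_Mapping.lookup J (0,0,2) = 0"
  unfolding J_def c1_def c2_def c3_def jac3_def pd_lf pd_lf1
  by (simp_all add: polysimps lookup_minus when_def algebra_simps)

lemma prod_lf_coeffs:
  fixes a1 a2 a3 b1 b2 b3 :: "'k::comm_ring_1"
  defines "M \<equiv> lf a1 a2 a3 * lf b1 b2 b3"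
  shows "Poly_Mapping.lookup M (2,0,0) = a1*b1"
    "Poly_Mapping.lookup M (Suc 0,Suc 0,0) = a1*b2 + a2*b1"
    "Poly_Mapping.lookup M (Suc 0,0,Suc 0) = a1*b3 + a3*b1"
    "Poly_Mapping.lookup M (0,Suc 0,Suc 0) = a2*b3 + a3*b2"
    "Poly_Mapping.lookup M (0,2,0) = a2*b2"
    "Poly_Mapping.lookup M (0,0,2) = a3*b3"
  unfolding M_def
  by (simp_all add: polysimps when_def)



lemma const3_numeral: "const3 (numeral n) = (numeral n :: 'k::comm_ring_1 mpoly3)"
  by (simp add: const3_def zero3)

lemma tdeg1: "tdeg m = 1 \<longleftrightarrow> m = (1,0,0) \<or> m = (0,1,0) \<or> m = (0,0,1)"
  by (cases m) (auto simp: tdeg_def)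

lemma homog1_lf: assumes "homog 1 p"
  shows "p = lf (Poly_Mapping.lookup p (1,0,0)) (Poly_Mapping.lookup p (0,1,0)) (Poly_Mapping.lookup p (0,0,1))"
proof (rule poly_mapping_eqI)
  fix k
  show "Poly_Mapping.lookup p k = Poly_Mapping.lookup (lf (Poly_Mapping.lookup p (1,0,0)) (Poly_Mapping.lookup p (0,1,0)) (Poly_Mapping.lookup p (0,0,1))) k"
  proof (cases "k \<in> Poly_Mapping.keys p")
    case True
    then have "tdeg k = 1" using assms by (simp add: homog_def)
    then have "k = (1,0,0) \<or> k = (0,1,0) \<or> k = (0,0,1)" using tdeg1 by blast
    then show ?thesis by (auto simp: lf_def lookup_add lookup_single)
  next
    case False
    then show ?thesis by (auto simp: lf_def lookup_add lookup_single when_def in_keys_iff)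
  qed
qed

lemma homog_var: "homog 1 (var3 j)"
  by (simp add: homog_def var3_def eunit_def tdeg_def)

lemma lookup_lf: "Poly_Mapping.lookup (lf a b c) (1,0,0) = a" "Poly_Mapping.lookup (lf a b c) (0,1,0) = b"
  "Poly_Mapping.lookup (lf a b c) (0,0,1) = c"
  by (simp_all add: lf_def lookup_add lookup_single)

lemma lookup_lf': "Poly_Mapping.lookup (lf a b c) (Suc 0,0,0) = a" "Poly_Mapping.lookup (lf a b c) (0,Suc 0,0) = b"
  "Poly_Mapping.lookup (lf a b c) (0,0,Suc 0) = c"
  by (simp_all add: lf_def lookup_add lookup_single)

lemma refl_alg:
  fixes p1 q2 u3 xi :: "'k::field_char_0"
  assumes a1: "p1 + q2 + u3 = 2 + xi" and a2: "p1*q2 + p1*u3 + q2*u3 = 1 + 2*xi"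
    and a3: "p1*q2*u3 = xi" and a4: "q2*u3 = p1*p1" and a5: "xi \<noteq> 1"
  shows "p1 = -1 \<and> q2 = 1 \<and> u3 = 1"
proof -
  have x: "xi = p1^3" using a3 a4 by (simp add: power3_eq_cube mult.assoc)
  have s: "q2 + u3 = 2 + xi - p1" using a1 by (simp add: algebra_simps)
  have "p1*(q2+u3) + q2*u3 = 1 + 2*xi" using a2 by (simp add: algebra_simps)
  then have "p1*(2 + xi - p1) + p1*p1 = 1 + 2*xi" using s a4 by simp
  then have b: "p1*(2 + p1^3) = 1 + 2*p1^3" using x by (simp add: algebra_simps)
  have "(p1 - 1)^3 * (p1 + 1) = p1*(2 + p1^3) - (1 + 2*p1^3)"
    by (simp add: algebra_simps power3_eq_cube power4_eq_xxxx)
  also have "\<dots> = 0" using b by simp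
  finally have "(p1 - 1)^3 * (p1 + 1) = 0" .
  then have "p1 - 1 = 0 \<or> p1 + 1 = 0" by simp
  then have "p1 = 1 \<or> p1 = -1" by (auto simp: eq_neg_iff_add_eq_0)
  moreover have "p1 \<noteq> 1" using x a5 by auto
  ultimately have P: "p1 = -1" by blast
  then have xm: "xi = -1" using x by simp
  have s2: "q2 + u3 = 2" using s P xm by simp
  have pr: "q2 * u3 = 1" using a4 P by simp
  have "(q2 - 1)^2 = q2*q2 - 2*q2 + 1"
    by (simp add: algebra_simps power2_eq_square)
  also have "\<dots> = q2*q2 - (q2 + u3)*q2 + q2*u3" using s2 pr by simp
  also have "\<dots> = 0" by (simp add: algebra_simps)
  finally have "q2 = 1" by simp
  then show ?thesis using P s2 by simp
qed

lemma pbr_vars: "pbr (var3 0) (var3 1) = (var3 0 * var3 1 :: 'k::comm_ring_1 mpoly3)"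
  "pbr (var3 1) (var3 2) = (3 * var3 0 * var3 0 + 2 * var3 0 * var3 1 + var3 1 * var3 2 :: 'k::comm_ring_1 mpoly3)"
  "pbr (var3 2) (var3 0) = (var3 0 * var3 0 + var3 0 * var3 2 :: 'k::comm_ring_1 mpoly3)"
  by (simp_all add: pbr_jac jac3_def pd_var pd0_Om pd1_Om pd1_Om' pd2_Om)

lemma refl_action:
  fixes r :: "'k::field_char_0 mpoly3 \<Rightarrow> 'k mpoly3"
  assumes "poisson_reflection r"
  shows "r (var3 0) = lf (-1) 0 0 \<and> r (var3 1) = lf 0 1 0 \<and> r (var3 2) = lf 2 0 1"
proof -
  from assms have rP: "r \<in> PAut_gr" unfolding poisson_reflection_def by blast
  from assms obtain \<xi> :: 'k where xi1: "\<xi> \<noteq> 1" and cp: "char_poly (lin_mat r) = [:-1, 1:] ^ 2 * [:-\<xi>, 1:]"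
    unfolding poisson_reflection_def by blast
  from rP have bij: "bij r" and ph: "poisson_hom r" and hg: "\<And>d p. homog d p \<Longrightarrow> homog d (r p)"
    unfolding PAut_gr_def by auto
  from ph have ah: "alg_hom3 r" and pr: "\<And>p q. r (pbr p q) = pbr (r p) (r q)" unfolding poisson_hom_def by auto
  have radd: "\<And>p q. r (p + q) = r p + r q" and rmul: "\<And>p q. r (p * q) = r p * r q"
    and rc: "\<And>c. r (const3 c) = const3 c" using ah unfolding alg_hom3_def by auto
  have rnum: "\<And>n. r (numeral n) = numeral n" using rc const3_numeral by metis
  define p1 where "p1 = Poly_Mapping.lookup (r (var3 0)) (1,0,0)"
  define p2 where "p2 = Poly_Mapping.lookup (r (var3 0)) (0,1,0)"
  define p3 where "p3 = Poly_Mapping.lookup (r (var3 0)) (0,0,1)"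
  define q1 where "q1 = Poly_Mapping.lookup (r (var3 1)) (1,0,0)"
  define q2 where "q2 = Poly_Mapping.lookup (r (var3 1)) (0,1,0)"
  define q3 where "q3 = Poly_Mapping.lookup (r (var3 1)) (0,0,1)"
  define u1 where "u1 = Poly_Mapping.lookup (r (var3 2)) (1,0,0)"
  define u2 where "u2 = Poly_Mapping.lookup (r (var3 2)) (0,1,0)"
  define u3 where "u3 = Poly_Mapping.lookup (r (var3 2)) (0,0,1)"
  have L0: "r (var3 0) = lf p1 p2 p3" unfolding p1_def p2_def p3_def using homog1_lf hg homog_var by blast
  have L1: "r (var3 1) = lf q1 q2 q3" unfolding q1_def q2_def q3_def using homog1_lf hg homog_var by blast
  have L2: "r (var3 2) = lf u1 u2 u3" unfolding u1_def u2_def u3_def using homog1_lf hg homog_var by blast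
  have L1': "r (var3 (Suc 0)) = lf q1 q2 q3" using L1 by simp
  have L2': "r (var3 (Suc (Suc 0))) = lf u1 u2 u3" using L2 by (simp add: numeral_2_eq_2)
  have E3: "jac3 (lf p1 p2 p3) (lf q1 q2 q3) Om = lf p1 p2 p3 * lf q1 q2 q3"
    using pr[of "var3 0" "var3 1"] unfolding pbr_vars by (simp add: pbr_jac rmul L0 L1 L1')
  have E1: "jac3 (lf q1 q2 q3) (lf u1 u2 u3) Om = const3 3 * (lf p1 p2 p3 * lf p1 p2 p3) + const3 2 * (lf p1 p2 p3 * lf q1 q2 q3) + lf q1 q2 q3 * lf u1 u2 u3"
    using pr[of "var3 1" "var3 2"] unfolding pbr_vars by (simp add: pbr_jac rmul radd rnum L0 L1 L1' L2 const3_numeral mult.assoc)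
  have E2: "jac3 (lf u1 u2 u3) (lf p1 p2 p3) Om = lf p1 p2 p3 * lf p1 p2 p3 + lf p1 p2 p3 * lf u1 u2 u3"
    using pr[of "var3 2" "var3 0"] unfolding pbr_vars by (simp add: pbr_jac rmul radd L0 L1 L2)
  note cf = jac_lf_coeffs prod_lf_coeffs lookup_add lookup_const3_mult
  have e3a: "0 = p2 * q2" using arg_cong[OF E3, of "\<lambda>p. Poly_Mapping.lookup p (0,2,0)"] by (simp add: cf)
  have e3b: "0 = p3 * q3" using arg_cong[OF E3, of "\<lambda>p. Poly_Mapping.lookup p (0,0,2)"] by (simp add: cf)
  have e1a: "0 = 3 * (p2 * p2) + 2 * (p2 * q2) + q2 * u2" using arg_cong[OF E1, of "\<lambda>p. Poly_Mapping.lookup p (0,2,0)"] by (simp add: cf)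
  have e1b: "0 = 3 * (p3 * p3) + 2 * (p3 * q3) + q3 * u3" using arg_cong[OF E1, of "\<lambda>p. Poly_Mapping.lookup p (0,0,2)"] by (simp add: cf)
  have "p2 * (3 * (p2 * p2) + 2 * (p2 * q2) + q2 * u2) = 3 * p2 ^ 3 + 2 * p2 * (p2 * q2) + (p2 * q2) * u2"
    by (simp add: algebra_simps power3_eq_cube)
  also have "\<dots> = 3 * p2 ^ 3" using e3a[symmetric] by auto
  finally have "p2 * (3 * (p2 * p2) + 2 * (p2 * q2) + q2 * u2) = 3 * p2 ^ 3" .
  then have P2: "p2 = 0" using e1a by simp
  have "p3 * (3 * (p3 * p3) + 2 * (p3 * q3) + q3 * u3) = 3 * p3 ^ 3 + 2 * p3 * (p3 * q3) + (p3 * q3) * u3"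
    by (simp add: algebra_simps power3_eq_cube)
  also have "\<dots> = 3 * p3 ^ 3" using e3b[symmetric] by auto
  finally have "p3 * (3 * (p3 * p3) + 2 * (p3 * q3) + q3 * u3) = 3 * p3 ^ 3" .
  then have P3: "p3 = 0" using e1b by simp
  have p1nz: "p1 \<noteq> 0"
  proof
    assume "p1 = 0"
    then have "r (var3 0) = 0" using L0 P2 P3 by (simp add: lf_def)
    moreover have "r 0 = 0" using alg_hom3_zero[OF ah] .
    ultimately have "var3 0 = (0 :: 'k mpoly3)" using bij unfolding bij_def inj_def by metis
    then show False by (metis lookup_zero lookup_single_eq var3_def zero_neq_one)
  qed
  have e3c: "p3 * q1 - p1 * q3 = p1 * q3 + p3 * q1" using arg_cong[OF E3, of "\<lambda>p. Poly_Mapping.lookup p (1,0,1)"] by (simp add: cf)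
  then have Q3: "q3 = 0" using P3 p1nz by simp
  have e3d: "3 * (p2 * q3 - p3 * q2) + (p3 * q1 - p1 * q3) = p1 * q1" using arg_cong[OF E3, of "\<lambda>p. Poly_Mapping.lookup p (2,0,0)"] by (simp add: cf)
  then have Q1: "q1 = 0" using P2 P3 Q3 p1nz by simp
  have e2a: "3 * (u2 * p3 - u3 * p2) + (u3 * p1 - u1 * p3) = p1 * p1 + p1 * u1" using arg_cong[OF E2, of "\<lambda>p. Poly_Mapping.lookup p (2,0,0)"] by (simp add: cf)
  then have U3: "u3 = p1 + u1" using P2 P3 p1nz by (simp add: algebra_simps) (metis distrib_left mult_cancel_left mult.commute)
  have e2b: "2 * (u2 * p3 - u3 * p2) + (u1 * p2 - u2 * p1) = (p1 * p2 + p2 * p1) + (p1 * u2 + p2 * u1)" using arg_cong[OF E2, of "\<lambda>p. Poly_Mapping.lookup p (1,1,0)"] by (simp add: cf)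
  then have U2: "u2 = 0" using P2 P3 p1nz by simp
  have e1c: "3 * (q2 * u3 - q3 * u2) + (q3 * u1 - q1 * u3) = 3 * (p1 * p1) + 2 * (p1 * q1) + q1 * u1" using arg_cong[OF E1, of "\<lambda>p. Poly_Mapping.lookup p (2,0,0)"] by (simp add: cf)
  then have QU: "q2 * u3 = p1 * p1" using Q1 Q3 by simp
  have M: "lin_mat r \<in> carrier_mat 3 3" by (simp add: lin_mat_def)
  have ent: "lin_mat r $$ (i,j) = Poly_Mapping.lookup (r (var3 j)) (eunit i)" if "i<3" "j<3" for i j
    using that by (simp add: lin_mat_def)
  have UT: "upper_triangular (lin_mat r)"
  proof (rule upper_triangularI)
    fix i j assume "j < i" "i < dim_row (lin_mat r)"
    then have "i < 3" "j < 3" "(i = 1 \<and> j = 0) \<or> (i = 2 \<and> j = 0) \<or> (i = 2 \<and> j = 1)"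
      by (auto simp: lin_mat_def)
    then show "lin_mat r $$ (i,j) = 0"
      using ent by (auto simp: eunit_def L0 L1' L2 lookup_lf' P2 P3 Q3)
  qed
  have "diag_mat (lin_mat r) = [p1, q2, u3]"
    by (simp add: diag_mat_def lin_mat_def upt_rec eunit_def L0 L1' L2 L2' lookup_lf')
  then have "char_poly (lin_mat r) = [:-p1,1:] * ([:-q2,1:] * ([:-u3,1:] * 1))"
    by (simp add: char_poly_upper_triangular[OF M UT])
  with cp have "[:-p1,1:] * ([:-q2,1:] * ([:-u3,1:] * 1)) = [:-1, 1:] ^ 2 * [:-\<xi>, 1:]" by simp
  then have "p1 + q2 + u3 = 2 + \<xi> \<and> p1*q2 + p1*u3 + q2*u3 = 1 + 2*\<xi> \<and> p1*q2*u3 = \<xi>"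
    by (simp add: power2_eq_square algebra_simps)
  then have F: "p1 = -1 \<and> q2 = 1 \<and> u3 = 1" using refl_alg QU xi1 by blast
  have "u1 = u3 - p1" using U3 by simp
  then have "u1 = 2" using F by simp
  then show ?thesis using F L0 L1 L2 P2 P3 Q1 Q3 U2 by simp
qed



lemma gen_empty: "g \<in> gen_group {} \<Longrightarrow> g = id"
  by (induction rule: gen_group.induct) (auto simp: inv_id)

lemma gen_fix:
  assumes "\<forall>r\<in>R. r y = y" "\<forall>g\<in>gen_group R. bij g"
  shows "g \<in> gen_group R \<Longrightarrow> g y = y"
proof (induction rule: gen_group.induct)
  case gen_id then show ?case by simp
next
  case (gen_gen r) then show ?case using assms(1) by simp
next
  case (gen_comp f g) then show ?case by simp
next
  case (gen_inv f)
  have "inj f" using assms(2) gen_inv.hyps(1) by (simp add: bij_def)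
  then have "inv_into UNIV f (f y) = y" by (simp add: inv_into_f_f)
  then show ?case using gen_inv.IH by simp
qed

lemma lf_vars: "lf a b c = const3 a * var3 0 + const3 b * var3 1 + const3 c * var3 2"
  by (simp add: lf_def var_single const3_mult_single)

lemma const3_uminus: "const3 (- a) = - const3 a" by (simp add: const3_def single_uminus)

lemma lookup_shift: "Poly_Mapping.lookup (Poly_Mapping.single (e::expo) 1 * (p::'k::comm_ring_1 mpoly3)) (e + k) = Poly_Mapping.lookup p k"
proof (induction p rule: pm_induct)
  case zero then show ?case by simp
next
  case (single a b) then show ?case by (simp add: mult_single lookup_single when_def)
next
  case (add f g) then show ?case by (simp add: distrib_left lookup_add)
qed

lemma x0_cancel: "var3 0 * p = 0 \<Longrightarrow> p = 0"
  by (rule poly_mapping_eqI) (metis lookup_shift lookup_zero var3_def)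

lemma two_cancel: "2 * (p :: 'k::field_char_0 mpoly3) = 0 \<Longrightarrow> p = 0"
  by (rule poly_mapping_eqI) (metis const3_numeral lookup_const3_mult lookup_zero mult_eq_0_iff zero_neq_numeral)

lemma ev0_subst: assumes "\<And>i. ev0 (h i) = 0" shows "ev0 (subst h p) = ev0 p"
proof (induction p rule: pm_induct)
  case zero then show ?case by simp
next
  case (single m c)
  obtain a b d where m: "m = (a,b,d)" by (cases m) auto
  show ?case unfolding m
    by (simp add: subst_single mon_def ev0_mult ev0_power assms ev0_single zero_prod_def power_0_left)
next
  case (add f g) then show ?case by (simp add: subst_add ev0_add)
qed

lemma jY12: "jac3 (var3 1) (var3 0 + var3 2) c = pd 0 c - pd 2 c"
  by (simp add: jac3_def pd_add pd_var)
lemma jY10: "jac3 (var3 1) (var3 0 * var3 0) c = - (2 * (var3 0 * pd 2 c))"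
  by (simp add: jac3_def pd_add pd_mult pd_var algebra_simps)
lemma jY20: "jac3 (var3 0 + var3 2) (var3 0 * var3 0) c = 2 * (var3 0 * pd 1 c)"
  by (simp add: jac3_def pd_add pd_mult pd_var algebra_simps)
lemma jY012: "jac3 (var3 0 * var3 0) (var3 1) (var3 0 + var3 2) = (2 * var3 0 :: 'k::comm_ring_1 mpoly3)"
  by (simp add: jac3_def pd_add pd_mult pd_var algebra_simps)
lemma jR: "jac3 (- var3 0) (var3 1) (2 * var3 0 + var3 2) = (-1 :: 'k::comm_ring_1 mpoly3)"
  by (simp add: jac3_def pd_add pd_mult pd_var pd_uminus algebra_simps)



theorem lemma3p8p2:
  fixes G :: "('k::field_char_0 mpoly3 \<Rightarrow> 'k mpoly3) set"
  assumes alg_closed: "\<And>p :: 'k poly. degree p \<ge> 1 \<Longrightarrow> \<exists>x. poly p x = 0"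
    and G_sub: "G \<subseteq> PAut_gr"
    and G_fin: "finite G"
    and G_gen: "\<exists>R. R \<subseteq> {f. poisson_reflection f} \<and> G = gen_group R"
    and G_nontriv: "G \<noteq> {id}"
  shows "\<not> (\<exists>\<psi>. poisson_iso_onto \<psi> (invariants G))"
proof
  assume "\<exists>\<psi>. poisson_iso_onto \<psi> (invariants G)"
  then obtain \<psi> where bb: "bij_betw \<psi> UNIV (invariants G)" and ph: "poisson_hom \<psi>"
    unfolding poisson_iso_onto_def by blast
  from G_gen obtain R where RR: "R \<subseteq> {f. poisson_reflection f}" and GR: "G = gen_group R" by blast
  have bijG: "\<And>g. g \<in> G \<Longrightarrow> bij g" using G_sub unfolding PAut_gr_def by blast
  have Rne: "R \<noteq> {}"
  proof
    assume "R = {}"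
    then have "G \<subseteq> {id}" using GR gen_empty by blast
    moreover have "id \<in> G" using GR gen_group.gen_id by blast
    ultimately show False using G_nontriv by blast
  qed
  then obtain r where rR: "r \<in> R" by blast
  have rG: "r \<in> G" using rR GR gen_group.gen_gen by blast
  have ract: "\<And>r'. r' \<in> R \<Longrightarrow> r' (var3 0) = - var3 0 \<and> r' (var3 1) = var3 1 \<and> r' (var3 2) = 2 * var3 0 + var3 2"
  proof -
    fix r' assume "r' \<in> R"
    then have "poisson_reflection r'" using RR by blast
    then show "r' (var3 0) = - var3 0 \<and> r' (var3 1) = var3 1 \<and> r' (var3 2) = 2 * var3 0 + var3 2"
      using refl_action[of r'] by (simp add: lf_vars const3_uminus const3_numeral)
  qed
  have rah: "\<And>r'. r' \<in> R \<Longrightarrow> alg_hom3 r'"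
    using RR G_sub GR gen_group.gen_gen unfolding PAut_gr_def poisson_hom_def by blast
  define Y0 where "Y0 = (var3 0 * var3 0 :: 'k mpoly3)"
  define Y1 where "Y1 = (var3 1 :: 'k mpoly3)"
  define Y2 where "Y2 = (var3 0 + var3 2 :: 'k mpoly3)"
  have fixR: "\<And>r'. r' \<in> R \<Longrightarrow> r' Y0 = Y0 \<and> r' Y1 = Y1 \<and> r' Y2 = Y2"
  proof -
    fix r' assume a: "r' \<in> R"
    have m: "r' (p * q) = r' p * r' q" "r' (p + q) = r' p + r' q" for p q
      using rah[OF a] unfolding alg_hom3_def by auto
    show "r' Y0 = Y0 \<and> r' Y1 = Y1 \<and> r' Y2 = Y2"
      using ract[OF a] unfolding Y0_def Y1_def Y2_def m by simp
  qed
  have fixG: "\<And>g. g \<in> G \<Longrightarrow> g Y0 = Y0 \<and> g Y1 = Y1 \<and> g Y2 = Y2"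
  proof -
    fix g assume "g \<in> G"
    then have gg: "g \<in> gen_group R" using GR by simp
    have bR: "\<And>g. g \<in> gen_group R \<Longrightarrow> bij g" using bijG GR by blast
    have a0: "\<forall>r'\<in>R. r' Y0 = Y0" and a1: "\<forall>r'\<in>R. r' Y1 = Y1"
      and a2: "\<forall>r'\<in>R. r' Y2 = Y2" using fixR by auto
    have bR': "\<forall>g\<in>gen_group R. bij g" using bR by blast
    show "g Y0 = Y0 \<and> g Y1 = Y1 \<and> g Y2 = Y2"
      using gen_fix[OF a0 bR' gg] gen_fix[OF a1 bR' gg] gen_fix[OF a2 bR' gg] by blast
  qed
  have Yinv: "Y0 \<in> invariants G" "Y1 \<in> invariants G" "Y2 \<in> invariants G"
    using fixG unfolding invariants_def by auto
  have img: "\<psi> ` UNIV = invariants G" using bb by (simp add: bij_betw_def)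
  have ah: "alg_hom3 \<psi>" and pp: "\<And>p q. \<psi> (pbr p q) = pbr (\<psi> p) (\<psi> q)"
    using ph unfolding poisson_hom_def by auto
  define g where "g = (\<lambda>i. \<psi> (var3 i))"
  have psub: "\<And>p. \<psi> p = subst g p" unfolding g_def by (rule alg_hom3_subst[OF ah])
  define J where "J = jac3 (g 0) (g 1) (g 2)"
  define W where "W = subst g Om"
  have key: "jac3 a b W = J * jac3 a b Om" if "a \<in> invariants G" "b \<in> invariants G" for a b
  proof -
    have "a \<in> \<psi> ` UNIV" "b \<in> \<psi> ` UNIV" using that img by simp_all
    then obtain p q where p: "a = \<psi> p" and q: "b = \<psi> q" by blast
    have "jac3 a b W = J * subst g (jac3 p q Om)"
      unfolding p q psub W_def J_def by (rule jac3_subst)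
    also have "subst g (jac3 p q Om) = jac3 a b Om"
      using pp[of p q] unfolding p q psub pbr_jac .
    finally show ?thesis .
  qed
  have k1: "pd 0 W - pd 2 W = J * (pd 0 Om - pd 2 Om)"
    using key[OF Yinv(2) Yinv(3)] unfolding Y1_def Y2_def jY12 .
  have "- (2 * (var3 0 * pd 2 W)) = J * (- (2 * (var3 0 * pd 2 Om)))"
    using key[OF Yinv(2) Yinv(1)] unfolding Y1_def Y0_def jY10 .
  then have "var3 0 * (2 * (pd 2 W - J * pd 2 Om)) = 0" by (simp add: algebra_simps)
  then have V2: "pd 2 W = J * pd 2 Om" using x0_cancel two_cancel by fastforce
  have "2 * (var3 0 * pd 1 W) = J * (2 * (var3 0 * pd 1 Om))"
    using key[OF Yinv(3) Yinv(1)] unfolding Y2_def Y0_def jY20 .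
  then have "var3 0 * (2 * (pd 1 W - J * pd 1 Om)) = 0" by (simp add: algebra_simps)
  then have V1: "pd 1 W = J * pd 1 Om" using x0_cancel two_cancel by fastforce
  have V0: "pd 0 W = J * pd 0 Om" using k1 V2 by (simp add: algebra_simps)
  have "pd 2 (pd 0 W) = pd 0 (pd 2 W)" by (rule pd_comm)
  then have "pd 2 J * pd 0 Om + J * pd 2 (pd 0 Om) = pd 0 J * pd 2 Om + J * pd 0 (pd 2 Om)"
    unfolding V0 V2 pd_mult .
  moreover have C: "pd 2 (pd 0 Om) = pd 0 (pd 2 (Om :: 'k mpoly3))" by (rule pd_comm)
  ultimately have "pd 2 J * pd 0 Om + J * pd 0 (pd 2 Om) = pd 0 J * pd 2 Om + J * pd 0 (pd 2 Om)"
    by (simp only:)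
  then have F: "pd 2 J * pd 0 Om = pd 0 J * pd 2 Om" by (rule add_right_imp_eq)
  have F1: "ev0 (pd 0 (pd 0 (pd 2 J * pd 0 Om))) = ev0 (pd 0 (pd 0 (pd 0 J * pd 2 Om)))" by (simp only: F)
  have F2: "ev0 (pd 0 (pd 1 (pd 2 J * pd 0 Om))) = ev0 (pd 0 (pd 1 (pd 0 J * pd 2 Om)))" by (simp only: F)
  have J2: "ev0 (pd 2 J) = 0" using F1
    by (simp add: pd0_Om pd2_Om pd_mult pd_add pd_var ev0_mult ev0_add)
  have J0: "ev0 (pd 0 J) = 0" using F2 J2
    by (simp add: pd0_Om pd2_Om pd_mult pd_add pd_var ev0_mult ev0_add)
  have rah1: "alg_hom3 r" using rah rR by blast
  define h where "h = (\<lambda>i. r (var3 i))"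
  have rsub: "\<And>p. r p = subst h p" unfolding h_def by (rule alg_hom3_subst[OF rah1])
  have ginv: "g i \<in> invariants G" for i
  proof -
    have "\<psi> (var3 i) \<in> \<psi> ` UNIV" by simp
    then show ?thesis unfolding g_def img .
  qed
  have rg: "\<And>i. r (g i) = g i" using ginv rG unfolding invariants_def by blast
  have h0: "h 0 = - var3 0" "h 1 = var3 1" "h 2 = 2 * var3 0 + var3 2" using ract[OF rR] unfolding h_def by auto
  have rg': "\<And>i. subst h (g i) = g i" using rg rsub by simp
  have "J = jac3 (subst h (g 0)) (subst h (g 1)) (subst h (g 2))"
    by (simp only: rg' J_def)
  also have "\<dots> = jac3 (h 0) (h 1) (h 2) * subst h J" unfolding J_def by (rule jac3_subst)
  also have "\<dots> = - subst h J" unfolding h0 jR by simp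
  finally have JJ: "J = - subst h J" .
  have "ev0 J = ev0 (- subst h J)" using JJ by (rule arg_cong)
  then have "ev0 J = - ev0 (subst h J)" by (simp only: ev0_uminus)
  moreover have "ev0 (subst h J) = ev0 J"
  proof (rule ev0_subst)
    fix i :: nat
    have "h i = h 0 \<or> h i = h 1 \<or> h i = h 2"
    proof (cases "i \<ge> 2")
      case True then have "var3 i = (var3 2 :: 'k mpoly3)" by (simp add: var3_def eunit_def)
      then show ?thesis unfolding h_def by simp
    next
      case False then have "i = 0 \<or> i = 1" by auto
      then show ?thesis by auto
    qed
    then show "ev0 (h i) = 0" unfolding h0 by (auto simp: ev0_uminus ev0_add ev0_mult)
  qed
  ultimately have "ev0 J = - ev0 J" by simp
  then have J00: "ev0 J = 0" by simp
  have "Y0 \<in> \<psi> ` UNIV" "Y1 \<in> \<psi> ` UNIV" "Y2 \<in> \<psi> ` UNIV" using Yinv img by simp_all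
  then obtain k0 k1 k2 where k0: "Y0 = \<psi> k0" and k1': "Y1 = \<psi> k1" and k2: "Y2 = \<psi> k2" by blast
  have "2 * var3 0 = jac3 Y0 Y1 Y2" unfolding Y0_def Y1_def Y2_def jY012 ..
  also have "\<dots> = J * subst g (jac3 k0 k1 k2)" unfolding k0 k1' k2 psub J_def by (rule jac3_subst)
  finally have "ev0 (pd 0 (2 * var3 0)) = ev0 (pd 0 (J * subst g (jac3 k0 k1 k2)))" by simp
  then have "(2::'k) = 0" using J0 J00 by (simp add: pd_mult pd_var ev0_mult ev0_add pd_add)
  then show False by simp
qed


end
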